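(* Let $F:\mathbb{R}\to[0,1]$ be a distribution function, let $0<\lambda\le1$ and $\alpha\in(0,1)$, and put $\xi=F^{\wedge}(\alpha)$, $\eta=F^{\vee}(\alpha)$ and $A^{+}_{\lambda,\alpha}=\{x\in\mathbb{R}:x>\xi,\ F_\lambda(x)\le\alpha\}$. (i) If $\xi<\eta$, then $F(\xi)=\alpha=F(\eta-)$, $\alpha\notin\bigcup_{x\in J_F}\big(F(x-),F(x)\big)$, the set $\{x\in\mathbb{R}:x>\xi,\ F(x)=\alpha\}$ is non-empty, the restriction $F|_{A^{+}_{\lambda,\alpha}}$ is continuous, and \[A^{+}_{\lambda,\alpha}=\{x\in\mathbb{R}:x>\xi,\ F(x)=\alpha\}=\begin{cases}(\xi,\eta)&\text{if }F(\eta)>\alpha,\\(\xi,\eta]&\text{if }F(\eta)=\alpha.\end{cases}\] (ii) If $\xi=\eta$, then $A^{+}_{\lambda,\alpha}=\emptyset$. (iii) $J_F=\{x\in\mathbb{R}:F^{\wedge}(u)=x=F^{\vee}(u)\text{ and }\Delta F(F^{\wedge}(u))>0\text{ for some }u\in(0,1)\}=\{x\in\mathbb{R}:F^{\wedge}(u)=x=F^{\vee}(u)\text{ and }\Delta F(F^{\vee}(u))>0\text{ for some }u\in(0,1)\}$. Moreover, the following are equivalent: (a) $0<\Delta F^{\wedge}(\alpha)=\eta-\xi$; (b) $\{x\in\mathbb{R}:x>\xi,\ F(x)=\alpha\}\neq\emptyset$.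
   Context: A distribution function is a non-decreasing, right-continuous $F:\mathbb{R}\to[0,1]$ with limits $0$ at $-\infty$ and $1$ at $+\infty$. $F(x-)=\lim_{z\uparrow x}F(z)$, $\Delta F(x)=F(x)-F(x-)$, $J_F=\{x:\Delta F(x)>0\}$, $F_\lambda(x)=F(x-)+\lambda\Delta F(x)$. For $\alpha\in(0,1)$: $F^{\wedge}(\alpha)=\inf\{x:F(x)\ge\alpha\}$ (left quantile, a left-continuous non-decreasing function on $(0,1)$) and $F^{\vee}(\alpha)=\inf\{x:F(x)>\alpha\}=\sup\{x:F(x)\le\alpha\}=F^{\wedge}(\alpha+)$ (right quantile). The jump of $F^{\wedge}$ at $\alpha$ is $\Delta F^{\wedge}(\alpha)=F^{\wedge}(\alpha+)-F^{\wedge}(\alpha)=F^{\vee}(\alpha)-F^{\wedge}(\alpha)$. *)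

theory Defs
  imports Complex_Main
begin

definition distfun :: "(real \<Rightarrow> real) \<Rightarrow> bool" where
  "distfun F \<longleftrightarrow> mono F \<and> (\<forall>x. 0 \<le> F x \<and> F x \<le> 1)
     \<and> (\<forall>x. continuous (at_right x) F)
     \<and> (F \<longlongrightarrow> 0) at_bot \<and> (F \<longlongrightarrow> 1) at_top"

definition lft :: "(real \<Rightarrow> real) \<Rightarrow> real \<Rightarrow> real" where
  "lft F x = Lim (at_left x) F"

definition jump :: "(real \<Rightarrow> real) \<Rightarrow> real \<Rightarrow> real" where
  "jump F x = F x - lft F x"

definition jumps :: "(real \<Rightarrow> real) \<Rightarrow> real set" where
  "jumps F = {x. jump F x > 0}"

definition Flam :: "(real \<Rightarrow> real) \<Rightarrow> real \<Rightarrow> real \<Rightarrow> real" where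
  "Flam F l x = lft F x + l * jump F x"

definition lquant :: "(real \<Rightarrow> real) \<Rightarrow> real \<Rightarrow> real" where
  "lquant F a = Inf {x. F x \<ge> a}"

definition rquant :: "(real \<Rightarrow> real) \<Rightarrow> real \<Rightarrow> real" where
  "rquant F a = Inf {x. F x > a}"

definition qjump :: "(real \<Rightarrow> real) \<Rightarrow> real \<Rightarrow> real" where
  "qjump F a = Lim (at_right a) (lquant F) - lquant F a"

definition Aplus :: "(real \<Rightarrow> real) \<Rightarrow> real \<Rightarrow> real \<Rightarrow> real set" where
  "Aplus F l a = {x. x > lquant F a \<and> Flam F l x \<le> a}"

end

theory Submission imports Defs "HOL-Analysis.Analysis" begin

lemma df_mono: assumes "distfun F" "x \<le> y" shows "F x \<le> F y"
proof -
  have "mono F" using assms(1) unfolding distfun_def by simp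
  thus ?thesis using assms(2) by (rule monoD)
qed

lemma df_bnd: "distfun F \<Longrightarrow> 0 \<le> F x \<and> F x \<le> 1"
  unfolding distfun_def by simp

lemma df_bdd: assumes "distfun F" "0 < u" shows "bdd_below {x. u \<le> F x}" "bdd_below {x. u < F x}"
proof -
  have "(F \<longlongrightarrow> 0) at_bot" using assms unfolding distfun_def by simp
  hence "eventually (\<lambda>x. F x < u) at_bot" using assms(2) by (simp add: order_tendstoD(2))
  then obtain N where N: "\<And>x. x \<le> N \<Longrightarrow> F x < u" unfolding eventually_at_bot_linorder by blast
  have "N \<le> x" if "u \<le> F x" for x
  proof (rule ccontr)
    assume "\<not> N \<le> x" hence "F x < u" using N by simp
    thus False using that by simp
  qed
  thus "bdd_below {x. u \<le> F x}" unfolding bdd_below_def by blast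
  have "N \<le> x" if "u < F x" for x
  proof (rule ccontr)
    assume "\<not> N \<le> x" hence "F x < u" using N by simp
    thus False using that by simp
  qed
  thus "bdd_below {x. u < F x}" unfolding bdd_below_def by blast
qed

lemma df_ne: assumes "distfun F" "u < 1" shows "{x. u < F x} \<noteq> {}" "{x. u \<le> F x} \<noteq> {}"
proof -
  have "(F \<longlongrightarrow> 1) at_top" using assms unfolding distfun_def by simp
  hence "eventually (\<lambda>x. u < F x) at_top" using assms(2) by (simp add: order_tendstoD(1))
  then obtain N where N: "\<And>x. x \<ge> N \<Longrightarrow> u < F x" unfolding eventually_at_top_linorder by blast
  have "u < F N" using N by simp
  thus "{x. u < F x} \<noteq> {}" by auto
  show "{x. u \<le> F x} \<noteq> {}" using \<open>u < F N\<close> less_imp_le by blast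
qed

lemma q1: assumes "distfun F" "0 < u" "u < 1" "lquant F u < x" shows "u \<le> F x"
proof -
  from assms(4) obtain s where "s \<in> {x. u \<le> F x}" "s < x"
    using cInf_less_iff[OF df_ne(2)[OF assms(1,3)] df_bdd(1)[OF assms(1,2)]] unfolding lquant_def by auto
  thus ?thesis using df_mono[OF assms(1), of s x] by auto
qed

lemma q2: assumes "distfun F" "0 < u" "x < lquant F u" shows "F x < u"
  using cInf_lower[OF _ df_bdd(1)[OF assms(1,2)], of x] assms(3) unfolding lquant_def by force

lemma r1: assumes "distfun F" "0 < u" "u < 1" "rquant F u < x" shows "u < F x"
proof -
  from assms(4) obtain s where "s \<in> {x. u < F x}" "s < x"
    using cInf_less_iff[OF df_ne(1)[OF assms(1,3)] df_bdd(2)[OF assms(1,2)]] unfolding rquant_def by auto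
  thus ?thesis using df_mono[OF assms(1), of s x] by auto
qed

lemma r2: assumes "distfun F" "0 < u" "x < rquant F u" shows "F x \<le> u"
  using cInf_lower[OF _ df_bdd(2)[OF assms(1,2)], of x] assms(3) unfolding rquant_def by force

lemma q3: assumes "distfun F" "0 < u" "u < 1" shows "u \<le> F (lquant F u)"
proof -
  have "(F \<longlongrightarrow> F (lquant F u)) (at_right (lquant F u))"
    using assms(1) unfolding distfun_def by (simp add: continuous_within)
  moreover have "eventually (\<lambda>y. u \<le> F y) (at_right (lquant F u))"
    using eventually_at_right_less by (rule eventually_mono) (rule q1[OF assms])
  ultimately show ?thesis by (rule tendsto_lowerbound) simp
qed

lemma lft_tendsto: assumes "distfun F" shows "(F \<longlongrightarrow> lft F x) (at_left x)"
proof -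
  have "(F \<longlongrightarrow> Sup (F ` ({..<x} \<inter> UNIV))) (at x within ({..<x} \<inter> UNIV))"
    by (rule Lim_left_bound[where K=1]) (use df_mono[OF assms] df_bnd[OF assms] in auto)
  hence "(F \<longlongrightarrow> Sup (F ` {..<x})) (at_left x)" by simp
  thus ?thesis unfolding lft_def using tendsto_Lim by (metis trivial_limit_at_left_real)
qed

lemma lft_le: assumes "distfun F" shows "lft F x \<le> F x"
  by (rule tendsto_upperbound[OF lft_tendsto[OF assms]])
     (rule eventually_mono[OF eventually_at_left_real[of "x-1" x]], auto intro: df_mono[OF assms])

lemma lft_ge: assumes "distfun F" "y < x" shows "F y \<le> lft F x"
  by (rule tendsto_lowerbound[OF lft_tendsto[OF assms(1)]])
     (rule eventually_mono[OF eventually_at_left_real[OF assms(2)]], auto intro: df_mono[OF assms(1)])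

lemma lft_const: assumes "distfun F" "a < x" "\<And>y. a < y \<Longrightarrow> y < x \<Longrightarrow> F y = c" shows "lft F x = c"
proof (rule antisym)
  show "lft F x \<le> c"
    by (rule tendsto_upperbound[OF lft_tendsto[OF assms(1)]])
     (auto intro: eventually_mono[OF eventually_at_left_real[OF assms(2)]] simp: assms(3))
  have "F ((a+x)/2) = c" using assms by auto
  thus "c \<le> lft F x" using lft_ge[OF assms(1), of "(a+x)/2" x] assms(2) by auto
qed

lemma qlim: assumes "distfun F" "0 < a" "a < 1" shows "(lquant F \<longlongrightarrow> rquant F a) (at_right a)"
proof (rule order_tendstoI)
  fix c assume c: "c < rquant F a"
  show "eventually (\<lambda>u. c < lquant F u) (at_right a)"
  proof (rule eventually_mono[OF eventually_at_right_real[OF assms(3)]])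
    fix u assume u: "u \<in> {a<..<1}"
    have "Inf {x. a < F x} \<le> Inf {x. u \<le> F x}"
      by (rule cInf_superset_mono[OF df_ne(2)[OF assms(1)] df_bdd(2)[OF assms(1,2)]]) (use u in auto)
    thus "c < lquant F u" using c unfolding lquant_def rquant_def by simp
  qed
next
  fix b assume b: "rquant F a < b"
  define x where "x = (rquant F a + b)/2"
  have Fx: "a < F x" by (rule r1[OF assms]) (use b in \<open>simp add: x_def\<close>)
  show "eventually (\<lambda>u. lquant F u < b) (at_right a)"
  proof (rule eventually_mono[OF eventually_at_right_real[OF Fx]])
    fix u assume u: "u \<in> {a<..<F x}"
    have "lquant F u \<le> x" unfolding lquant_def
      by (rule cInf_lower[OF _ df_bdd(1)[OF assms(1)]]) (use u assms in auto)
    thus "lquant F u < b" using b by (simp add: x_def)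
  qed
qed

theorem mainTheorem3:
  fixes F :: "real \<Rightarrow> real" and l \<alpha> :: real
  assumes "distfun F" and "0 < l" and "l \<le> 1" and "0 < \<alpha>" and "\<alpha> < 1"
  defines "\<xi> \<equiv> lquant F \<alpha>" and "\<eta> \<equiv> rquant F \<alpha>"
  shows "(\<xi> < \<eta> \<longrightarrow>
            F \<xi> = \<alpha> \<and> \<alpha> = lft F \<eta>
          \<and> \<alpha> \<notin> (\<Union>x\<in>jumps F. {lft F x<..<F x})
          \<and> {x. x > \<xi> \<and> F x = \<alpha>} \<noteq> {}
          \<and> continuous_on (Aplus F l \<alpha>) F
          \<and> Aplus F l \<alpha> = {x. x > \<xi> \<and> F x = \<alpha>}
          \<and> (F \<eta> > \<alpha> \<longrightarrow> {x. x > \<xi> \<and> F x = \<alpha>} = {\<xi><..<\<eta>})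
          \<and> (F \<eta> = \<alpha> \<longrightarrow> {x. x > \<xi> \<and> F x = \<alpha>} = {\<xi><..\<eta>}))
       \<and> (\<xi> = \<eta> \<longrightarrow> Aplus F l \<alpha> = {})
       \<and> jumps F = {x. \<exists>u\<in>{0<..<1}. lquant F u = x \<and> x = rquant F u \<and> jump F (lquant F u) > 0}
       \<and> jumps F = {x. \<exists>u\<in>{0<..<1}. lquant F u = x \<and> x = rquant F u \<and> jump F (rquant F u) > 0}
       \<and> ((0 < qjump F \<alpha> \<and> qjump F \<alpha> = \<eta> - \<xi>) \<longleftrightarrow> {x. x > \<xi> \<and> F x = \<alpha>} \<noteq> {})"
proof -
  note df = assms(1)
  have Q1: "\<And>x. \<xi> < x \<Longrightarrow> \<alpha> \<le> F x" using q1[OF df assms(4,5)] \<xi>_def by blast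
  have Q2: "\<And>x. x < \<xi> \<Longrightarrow> F x < \<alpha>" using q2[OF df assms(4)] \<xi>_def by blast
  have Q3: "\<alpha> \<le> F \<xi>" using q3[OF df assms(4,5)] \<xi>_def by blast
  have R1: "\<And>x. \<eta> < x \<Longrightarrow> \<alpha> < F x" using r1[OF df assms(4,5)] \<eta>_def by blast
  have R2: "\<And>x. x < \<eta> \<Longrightarrow> F x \<le> \<alpha>" using r2[OF df assms(4)] \<eta>_def by blast
  have lftgeQ: "\<And>x. \<xi> < x \<Longrightarrow> \<alpha> \<le> lft F x"
  proof -
    fix x assume x: "\<xi> < x"
    show "\<alpha> \<le> lft F x" using Q1[of "(\<xi>+x)/2"] lft_ge[OF df, of "(\<xi>+x)/2" x] x by auto
  qed
  have xieta: "\<xi> \<le> \<eta>" unfolding \<xi>_def \<eta>_def lquant_def rquant_def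
    by (rule cInf_superset_mono[OF df_ne(1)[OF df assms(5)] df_bdd(1)[OF df assms(4)]]) auto
  have E: "(\<exists>x. x > \<xi> \<and> F x = \<alpha>) \<longleftrightarrow> \<xi> < \<eta>"
  proof
    assume "\<exists>x. x > \<xi> \<and> F x = \<alpha>"
    then obtain x where x: "x > \<xi>" "F x = \<alpha>" by auto
    have "x \<le> \<eta>" using R1[of x] x by force
    thus "\<xi> < \<eta>" using x by simp
  next
    assume "\<xi> < \<eta>"
    thus "\<exists>x. x > \<xi> \<and> F x = \<alpha>"
      using Q1[of "(\<xi>+\<eta>)/2"] R2[of "(\<xi>+\<eta>)/2"] by (intro exI[of _ "(\<xi>+\<eta>)/2"]) auto
  qed
  have P1: "\<xi> < \<eta> \<longrightarrow>
            F \<xi> = \<alpha> \<and> \<alpha> = lft F \<eta>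
          \<and> \<alpha> \<notin> (\<Union>x\<in>jumps F. {lft F x<..<F x})
          \<and> {x. x > \<xi> \<and> F x = \<alpha>} \<noteq> {}
          \<and> continuous_on (Aplus F l \<alpha>) F
          \<and> Aplus F l \<alpha> = {x. x > \<xi> \<and> F x = \<alpha>}
          \<and> (F \<eta> > \<alpha> \<longrightarrow> {x. x > \<xi> \<and> F x = \<alpha>} = {\<xi><..<\<eta>})
          \<and> (F \<eta> = \<alpha> \<longrightarrow> {x. x > \<xi> \<and> F x = \<alpha>} = {\<xi><..\<eta>})"
  proof
    assume lt: "\<xi> < \<eta>"
    have mid: "\<And>y. \<xi> < y \<Longrightarrow> y < \<eta> \<Longrightarrow> F y = \<alpha>" using Q1 R2 by (meson antisym)
    have "F \<xi> \<le> F ((\<xi>+\<eta>)/2)" using df_mono[OF df] lt by auto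
    hence f1: "F \<xi> = \<alpha>" using mid[of "(\<xi>+\<eta>)/2"] lt Q3 by auto
    have f2: "\<alpha> = lft F \<eta>" using lft_const[OF df lt mid] by simp
    have f3: "\<alpha> \<notin> (\<Union>x\<in>jumps F. {lft F x<..<F x})"
    proof
      assume "\<alpha> \<in> (\<Union>x\<in>jumps F. {lft F x<..<F x})"
      then obtain x where x: "lft F x < \<alpha>" "\<alpha> < F x" by auto
      have "\<eta> \<le> x" using R2[of x] x by force
      moreover have "x \<le> \<xi>" using lftgeQ[of x] x by force
      ultimately show False using lt by simp
    qed
    have f4: "{x. x > \<xi> \<and> F x = \<alpha>} \<noteq> {}" using E lt by simp
    have AE: "Aplus F l \<alpha> = {x. x > \<xi> \<and> F x = \<alpha>}"
    proof (rule set_eqI, rule iffI)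
      fix x assume "x \<in> Aplus F l \<alpha>"
      hence x: "x > \<xi>" "lft F x + l * (F x - lft F x) \<le> \<alpha>"
        unfolding Aplus_def Flam_def jump_def \<xi>_def by auto
      have g: "\<alpha> \<le> lft F x" "lft F x \<le> F x" using lftgeQ[OF x(1)] lft_le[OF df] by auto
      have "F x - lft F x \<le> 0"
      proof (rule ccontr)
        assume "\<not> F x - lft F x \<le> 0"
        hence "0 < l * (F x - lft F x)" using assms(2) by simp
        thus False using x g by simp
      qed
      thus "x \<in> {x. x > \<xi> \<and> F x = \<alpha>}" using x g by auto
    next
      fix x assume "x \<in> {x. x > \<xi> \<and> F x = \<alpha>}"
      hence x: "x > \<xi>" "F x = \<alpha>" by auto
      have "lft F x = \<alpha>" using lftgeQ[OF x(1)] lft_le[OF df, of x] x by auto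
      thus "x \<in> Aplus F l \<alpha>" unfolding Aplus_def Flam_def jump_def \<xi>_def using x \<xi>_def by auto
    qed
    have cont: "continuous_on (Aplus F l \<alpha>) F"
    proof -
      have "continuous_on (Aplus F l \<alpha>) (\<lambda>x. \<alpha>)" by simp
      moreover have "\<And>x. x \<in> Aplus F l \<alpha> \<Longrightarrow> F x = \<alpha>" using AE by auto
      ultimately show ?thesis using continuous_on_cong[of "Aplus F l \<alpha>" "Aplus F l \<alpha>" F "\<lambda>x. \<alpha>"] by simp
    qed
    have c1: "F \<eta> > \<alpha> \<longrightarrow> {x. x > \<xi> \<and> F x = \<alpha>} = {\<xi><..<\<eta>}"
    proof
      assume h: "F \<eta> > \<alpha>"
      show "{x. x > \<xi> \<and> F x = \<alpha>} = {\<xi><..<\<eta>}"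
      proof (rule set_eqI, rule iffI)
        fix x assume x: "x \<in> {x. x > \<xi> \<and> F x = \<alpha>}"
        have "x < \<eta>" using R1[of x] h x by (cases x \<eta> rule: linorder_cases) auto
        thus "x \<in> {\<xi><..<\<eta>}" using x by auto
      qed (use mid in auto)
    qed
    have c2: "F \<eta> = \<alpha> \<longrightarrow> {x. x > \<xi> \<and> F x = \<alpha>} = {\<xi><..\<eta>}"
    proof
      assume h: "F \<eta> = \<alpha>"
      show "{x. x > \<xi> \<and> F x = \<alpha>} = {\<xi><..\<eta>}"
      proof (rule set_eqI, rule iffI)
        fix x assume x: "x \<in> {x. x > \<xi> \<and> F x = \<alpha>}"
        have "x \<le> \<eta>" using R1[of x] x by force
        thus "x \<in> {\<xi><..\<eta>}" using x by auto
      next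
        fix x assume "x \<in> {\<xi><..\<eta>}"
        thus "x \<in> {x. x > \<xi> \<and> F x = \<alpha>}" using mid[of x] h by (cases "x = \<eta>") auto
      qed
    qed
    show "F \<xi> = \<alpha> \<and> \<alpha> = lft F \<eta>
          \<and> \<alpha> \<notin> (\<Union>x\<in>jumps F. {lft F x<..<F x})
          \<and> {x. x > \<xi> \<and> F x = \<alpha>} \<noteq> {}
          \<and> continuous_on (Aplus F l \<alpha>) F
          \<and> Aplus F l \<alpha> = {x. x > \<xi> \<and> F x = \<alpha>}
          \<and> (F \<eta> > \<alpha> \<longrightarrow> {x. x > \<xi> \<and> F x = \<alpha>} = {\<xi><..<\<eta>})
          \<and> (F \<eta> = \<alpha> \<longrightarrow> {x. x > \<xi> \<and> F x = \<alpha>} = {\<xi><..\<eta>})"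
      using f1 f2 f3 cont AE c1 c2 f4 by (intro conjI)
  qed
  have P2: "\<xi> = \<eta> \<longrightarrow> Aplus F l \<alpha> = {}"
  proof
    assume eq: "\<xi> = \<eta>"
    show "Aplus F l \<alpha> = {}"
    proof (rule ccontr)
      assume "Aplus F l \<alpha> \<noteq> {}"
      then obtain x where x: "x > \<eta>" "lft F x + l * (F x - lft F x) \<le> \<alpha>"
        unfolding Aplus_def Flam_def jump_def \<xi>_def using eq \<xi>_def by auto
      have "\<alpha> < F ((\<eta>+x)/2)" using R1 x by simp
      also have "\<dots> \<le> lft F x" using lft_ge[OF df] x by simp
      finally have a: "\<alpha> < lft F x" .
      have "0 \<le> l * (F x - lft F x)" using assms(2) lft_le[OF df, of x] by simp
      thus False using a x by simp
    qed
  qed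
  have J: "\<And>x. x \<in> jumps F \<Longrightarrow> \<exists>u\<in>{0<..<1}. lquant F u = x \<and> x = rquant F u"
  proof -
    fix x assume "x \<in> jumps F"
    hence jx: "lft F x < F x" unfolding jumps_def jump_def by simp
    define u where "u = (lft F x + F x)/2"
    have "0 \<le> F (x-1)" using df_bnd[OF df] by simp
    also have "\<dots> \<le> lft F x" using lft_ge[OF df, of "x-1" x] by simp
    finally have u0: "0 < u" using jx by (simp add: u_def)
    have u1: "u < 1" using jx df_bnd[OF df, of x] by (simp add: u_def)
    have below: "\<And>y. y < x \<Longrightarrow> F y < u"
    proof -
      fix y assume "y < x"
      hence "F y \<le> lft F x" by (rule lft_ge[OF df])
      thus "F y < u" using jx by (simp add: u_def)
    qed
    have "lquant F u = x"
    proof (rule antisym)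
      show "lquant F u \<le> x" unfolding lquant_def
        by (rule cInf_lower[OF _ df_bdd(1)[OF df u0]]) (use jx in \<open>simp add: u_def\<close>)
      show "x \<le> lquant F u"
      proof (rule ccontr)
        assume "\<not> x \<le> lquant F u"
        hence "lquant F u < (lquant F u + x)/2" "(lquant F u + x)/2 < x" by auto
        thus False using q1[OF df u0 u1] below by (meson not_le)
      qed
    qed
    moreover have "rquant F u = x"
    proof (rule antisym)
      show "rquant F u \<le> x" unfolding rquant_def
        by (rule cInf_lower[OF _ df_bdd(2)[OF df u0]]) (use jx in \<open>simp add: u_def\<close>)
      show "x \<le> rquant F u"
      proof (rule ccontr)
        assume "\<not> x \<le> rquant F u"
        hence "rquant F u < (rquant F u + x)/2" "(rquant F u + x)/2 < x" by auto
        thus False using r1[OF df u0 u1] below by (meson less_asym)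
      qed
    qed
    ultimately show "\<exists>u\<in>{0<..<1}. lquant F u = x \<and> x = rquant F u" using u0 u1 by auto
  qed
  have P3: "jumps F = {x. \<exists>u\<in>{0<..<1}. lquant F u = x \<and> x = rquant F u \<and> jump F (lquant F u) > 0}"
  proof (rule set_eqI, rule iffI)
    fix x assume x: "x \<in> jumps F"
    then obtain u where "u\<in>{0<..<1}" "lquant F u = x" "x = rquant F u" using J by blast
    moreover have "jump F x > 0" using x unfolding jumps_def by simp
    ultimately show "x \<in> {x. \<exists>u\<in>{0<..<1}. lquant F u = x \<and> x = rquant F u \<and> jump F (lquant F u) > 0}"
      by auto
  next
    fix x assume "x \<in> {x. \<exists>u\<in>{0<..<1}. lquant F u = x \<and> x = rquant F u \<and> jump F (lquant F u) > 0}"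
    then obtain u where "lquant F u = x" "jump F (lquant F u) > 0" by blast
    thus "x \<in> jumps F" unfolding jumps_def by simp
  qed
  have P4: "jumps F = {x. \<exists>u\<in>{0<..<1}. lquant F u = x \<and> x = rquant F u \<and> jump F (rquant F u) > 0}"
  proof (rule set_eqI, rule iffI)
    fix x assume x: "x \<in> jumps F"
    then obtain u where "u\<in>{0<..<1}" "lquant F u = x" "x = rquant F u" using J by blast
    moreover have "jump F x > 0" using x unfolding jumps_def by simp
    ultimately show "x \<in> {x. \<exists>u\<in>{0<..<1}. lquant F u = x \<and> x = rquant F u \<and> jump F (rquant F u) > 0}"
      by auto
  next
    fix x assume "x \<in> {x. \<exists>u\<in>{0<..<1}. lquant F u = x \<and> x = rquant F u \<and> jump F (rquant F u) > 0}"
    then obtain u where "x = rquant F u" "jump F (rquant F u) > 0" by blast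
    thus "x \<in> jumps F" unfolding jumps_def by simp
  qed
  have "Lim (at_right \<alpha>) (lquant F) = \<eta>"
    unfolding \<eta>_def by (rule tendsto_Lim[OF _ qlim[OF df assms(4,5)]]) simp
  hence qj: "qjump F \<alpha> = \<eta> - \<xi>" unfolding qjump_def \<xi>_def by simp
  have P5: "(0 < qjump F \<alpha> \<and> qjump F \<alpha> = \<eta> - \<xi>) \<longleftrightarrow> {x. x > \<xi> \<and> F x = \<alpha>} \<noteq> {}"
    using qj E by auto
  show ?thesis by (rule conjI[OF P1 conjI[OF P2 conjI[OF P3 conjI[OF P4 P5]]]])
qed

end
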